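(* Let $(\Omega,\mathbb B(\Omega),\mu,T)$ be a measure-preserving dynamical system and $\mathbf X$ an $\mathbb R^N$-valued random vector on $(\Omega,\mathbb B(\Omega))$ such that $h_\mu(T)=\lim_{d\to\infty}h_\mu(T,\mathcal P^{\mathbf X}(d))$, and such that either (a) there is $d_0\in\mathbb N$ with $h^{\mathbf X}_\mu(T,d)\ge h^{\mathbf X}_\mu(T,d+1)$ for all $d\ge d_0$, or (b) $\lim_{d\to\infty}h^{\mathbf X}_{\mu,\triangle}(T,d)$ exists. If $h_\mu(T)=\limsup_{d\to\infty}h^{\mathbf X}_\mu(T,d)$, then $h_\mu(T)=\limsup_{d\to\infty}h^{\mathbf X}_{\mu,\mathrm{cond}}(T,d)$.
   Context: A measure-preserving dynamical system $(\Omega,\mathbb B(\Omega),\mu,T)$ consists of a nonempty topological space $\Omega$ with Borel $\sigma$-algebra $\mathbb B(\Omega)$, a probability measure $\mu$, and a measurable map $T:\Omega\to\Omega$ with $\mu(T^{-1}B)=\mu(B)$ for all $B\in\mathbb B(\Omega)$. For a finite partition $\mathcal P=\{P_0,\dots,P_l\}\subset\mathbb B(\Omega)$ of $\Omega$: $H(\mathcal P)=-\sum_{P\in\mathcal P}\mu(P)\ln\mu(P)$ (with $0\ln0=0$); $\mathcal P_n$ is the partition consisting of the sets $P_{a_0}\cap T^{-1}(P_{a_1})\cap\dots\cap T^{-(n-1)}(P_{a_{n-1}})$, $a_i\in\{0,\dots,l\}$; $h_\mu(T,\mathcal P)=\lim_{n\to\infty}(H(\mathcal P_{n+1})-H(\mathcal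 P_n))$; the Kolmogorov–Sinai entropy is $h_\mu(T)=\sup_{\mathcal P}h_\mu(T,\mathcal P)$ over finite partitions. Let $\Pi_d$ be the set of permutations of $\{0,1,\dots,d\}$. A vector $(x_0,\dots,x_d)\in\mathbb R^{d+1}$ has ordinal pattern $\pi=(r_0,\dots,r_d)\in\Pi_d$ if $x_{r_0}\ge x_{r_1}\ge\dots\ge x_{r_d}$ and $r_{l-1}>r_l$ whenever $x_{r_{l-1}}=x_{r_l}$. For a random vector $\mathbf X=(X_1,\dots,X_N)$ and $d\in\mathbb N$, the ordinal partition $\mathcal P^{\mathbf X}(d)$ consists of the sets $P_{(\pi_1,\dots,\pi_N)}=\{\omega: (X_i(T^{d}\omega),X_i(T^{d-1}\omega),\dots,X_i(T\omega),X_i(\omega))\text{ has ordinal pattern }\pi_i\text{ for } i=1,\dots,N\}$, $\pi_i\in\Pi_d$. Permutation entropy: $h^{\mathbf X}_\mu(T,d)=\frac1d H(\mathcal P^{\mathbf X}(d))$. Sorting entropy: $h^{\mathbf X}_{\mu,\triangle}(T,d)=H(\mathcal P^{\mathbf X}(d+1))-H(\mathcal P^{\mathbf X}(d))$. Conditional entropy of ordinal patterns: $h^{\mathbf X}_{\mu,\mathrm{cond}}(T,d)=H(\mathcal P^{\mathbf X}(d)_2)-H(\mathcal P^{\mathbf X}(d))$. *)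

theory Defs
  imports "HOL-Probability.Probability"
begin

definition mpds :: "'a::topological_space measure \<Rightarrow> ('a \<Rightarrow> 'a) \<Rightarrow> bool" where
  "mpds M T \<longleftrightarrow> prob_space M \<and> sets M = sets borel \<and> T \<in> measurable M M \<and>
     (\<forall>B \<in> sets M. measure M (T -` B \<inter> space M) = measure M B)"

definition finite_partition :: "'a measure \<Rightarrow> 'a set set \<Rightarrow> bool" where
  "finite_partition M P \<longleftrightarrow> finite P \<and> P \<subseteq> sets M \<and> disjoint P \<and> \<Union>P = space M"

definition part_entropy :: "'a measure \<Rightarrow> 'a set set \<Rightarrow> real" where
  "part_entropy M P = - (\<Sum>A\<in>P. if measure M A = 0 then 0 else measure M A * ln (measure M A))"

definition refine_part :: "'a measure \<Rightarrow> ('a \<Rightarrow> 'a) \<Rightarrow> 'a set set \<Rightarrow> nat \<Rightarrow> 'a set set" where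
  "refine_part M T P n = {(\<Inter>j<n. (T ^^ j) -` (a j)) \<inter> space M | a. \<forall>j<n. a j \<in> P}"

definition ent_rel :: "'a measure \<Rightarrow> ('a \<Rightarrow> 'a) \<Rightarrow> 'a set set \<Rightarrow> real" where
  "ent_rel M T P = lim (\<lambda>n. part_entropy M (refine_part M T P (Suc n)) - part_entropy M (refine_part M T P n))"

definition KS_entropy :: "'a measure \<Rightarrow> ('a \<Rightarrow> 'a) \<Rightarrow> ereal" where
  "KS_entropy M T = (SUP P \<in> {P. finite_partition M P}. ereal (ent_rel M T P))"

definition perms :: "nat \<Rightarrow> nat list set" where
  "perms d = {r. distinct r \<and> set r = {0..d}}"

definition has_ord_pattern :: "(nat \<Rightarrow> real) \<Rightarrow> nat \<Rightarrow> nat list \<Rightarrow> bool" where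
  "has_ord_pattern x d r \<longleftrightarrow> r \<in> perms d \<and>
     (\<forall>l\<in>{1..d}. x (r ! (l - 1)) \<ge> x (r ! l) \<and>
                 (x (r ! (l - 1)) = x (r ! l) \<longrightarrow> r ! (l - 1) > r ! l))"

definition ord_part :: "'a measure \<Rightarrow> ('a \<Rightarrow> 'a) \<Rightarrow> ('n::finite \<Rightarrow> 'a \<Rightarrow> real) \<Rightarrow> nat \<Rightarrow> 'a set set" where
  "ord_part M T X d =
     {{\<omega> \<in> space M. \<forall>i. has_ord_pattern (\<lambda>k. X i ((T ^^ (d - k)) \<omega>)) d (\<pi> i)} | \<pi>.
        \<forall>i. \<pi> i \<in> perms d}"

definition perm_entropy :: "'a measure \<Rightarrow> ('a \<Rightarrow> 'a) \<Rightarrow> ('n::finite \<Rightarrow> 'a \<Rightarrow> real) \<Rightarrow> nat \<Rightarrow> real" where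
  "perm_entropy M T X d = part_entropy M (ord_part M T X d) / real d"

definition sorting_entropy :: "'a measure \<Rightarrow> ('a \<Rightarrow> 'a) \<Rightarrow> ('n::finite \<Rightarrow> 'a \<Rightarrow> real) \<Rightarrow> nat \<Rightarrow> real" where
  "sorting_entropy M T X d = part_entropy M (ord_part M T X (Suc d)) - part_entropy M (ord_part M T X d)"

definition cond_entropy :: "'a measure \<Rightarrow> ('a \<Rightarrow> 'a) \<Rightarrow> ('n::finite \<Rightarrow> 'a \<Rightarrow> real) \<Rightarrow> nat \<Rightarrow> real" where
  "cond_entropy M T X d = part_entropy M (refine_part M T (ord_part M T X d) 2) - part_entropy M (ord_part M T X d)"

end

theory Submission
  imports Defs "HOL-Library.List_Lexorder"
begin

definition psi :: "real \<Rightarrow> real \<Rightarrow> real" where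
  "psi a b = a * ln b - a * ln a"

lemma psi_nonneg: "0 \<le> a \<Longrightarrow> a \<le> b \<Longrightarrow> 0 \<le> psi a b"
proof (cases "a = 0")
  case False
  assume "0 \<le> a" "a \<le> b"
  then have "ln a \<le> ln b" using False by simp
  then show ?thesis unfolding psi_def using \<open>0 \<le> a\<close>
    by (metis mult_left_mono right_diff_distrib diff_ge_0_iff_ge)
qed (simp add: psi_def)

lemma log_sum:
  assumes fin: "finite S" and nn: "\<And>s. s \<in> S \<Longrightarrow> 0 \<le> a s" and le: "\<And>s. s \<in> S \<Longrightarrow> a s \<le> b s"
  shows "(\<Sum>s\<in>S. psi (a s) (b s)) \<le> psi (\<Sum>s\<in>S. a s) (\<Sum>s\<in>S. b s)"
proof -
  define A where "A = (\<Sum>s\<in>S. a s)"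
  define B where "B = (\<Sum>s\<in>S. b s)"
  have A0: "A \<ge> 0" unfolding A_def using nn by (simp add: sum_nonneg)
  have AB: "A \<le> B" unfolding A_def B_def using le by (simp add: sum_mono)
  show ?thesis
  proof (cases "A = 0")
    case True
    then have "\<forall>s\<in>S. a s = 0" using sum_nonneg_eq_0_iff[OF fin] nn unfolding A_def by blast
    then show ?thesis using True unfolding A_def psi_def by simp
  next
    case False
    then have Ap: "A > 0" using A0 by simp
    then have Bp: "B > 0" using AB by simp
    have key: "psi (a s) (b s) - a s * (ln B - ln A) \<le> (A / B) * b s - a s" if s: "s \<in> S" for s
    proof (cases "a s = 0")
      case True
      have "b s \<ge> 0" using nn[OF s] le[OF s] by simp
      then show ?thesis using True Ap Bp by (simp add: psi_def)
    next
      case False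
      then have as: "a s > 0" using nn[OF s] by simp
      then have bs: "b s > 0" using le[OF s] by simp
      have x: "b s * A / (a s * B) > 0" using as bs Ap Bp by simp
      have "ln (b s * A / (a s * B)) = ln (b s) + ln A - ln (a s) - ln B"
        using as bs Ap Bp by (simp add: ln_div ln_mult)
      moreover have "ln (b s * A / (a s * B)) \<le> b s * A / (a s * B) - 1"
        using ln_le_minus_one[OF x] .
      ultimately have "ln (b s) + ln A - ln (a s) - ln B \<le> b s * A / (a s * B) - 1" by simp
      then have "a s * (ln (b s) + ln A - ln (a s) - ln B) \<le> a s * (b s * A / (a s * B) - 1)"
        using as by (simp add: mult_left_mono)
      also have "\<dots> = (A / B) * b s - a s" using as Bp by (simp add: field_simps)
      finally show ?thesis unfolding psi_def by (simp add: algebra_simps)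
    qed
    have "(\<Sum>s\<in>S. psi (a s) (b s) - a s * (ln B - ln A)) \<le> (\<Sum>s\<in>S. (A / B) * b s - a s)"
      using key by (simp add: sum_mono)
    also have "\<dots> = (A / B) * B - A" by (simp add: sum_subtractf sum_distrib_left B_def A_def)
    also have "\<dots> = 0" using Bp by simp
    finally have "(\<Sum>s\<in>S. psi (a s) (b s)) \<le> A * (ln B - ln A)"
      by (simp add: sum_subtractf sum_distrib_right[symmetric] A_def[symmetric])
    then show ?thesis unfolding psi_def A_def[symmetric] B_def[symmetric] by (simp add: algebra_simps)
  qed
qed

definition cellp :: "'a measure \<Rightarrow> ('a \<Rightarrow> 'b) \<Rightarrow> 'b \<Rightarrow> 'a set" where
  "cellp M g l = {\<omega> \<in> space M. g \<omega> = l}"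

definition Ent :: "'a measure \<Rightarrow> ('a \<Rightarrow> 'b) \<Rightarrow> real" where
  "Ent M g = - (\<Sum>l\<in>g ` space M. measure M (cellp M g l) * ln (measure M (cellp M g l)))"

definition good :: "'a measure \<Rightarrow> ('a \<Rightarrow> 'b) \<Rightarrow> bool" where
  "good M g \<longleftrightarrow> finite (g ` space M) \<and> (\<forall>l. cellp M g l \<in> sets M)"

lemma cellp_empty: "l \<notin> g ` space M \<Longrightarrow> cellp M g l = {}"
  unfolding cellp_def by auto

lemma ent_superset:
  assumes "finite L" "g ` space M \<subseteq> L"
  shows "Ent M g = - (\<Sum>l\<in>L. measure M (cellp M g l) * ln (measure M (cellp M g l)))"
  unfolding Ent_def
  by (rule arg_cong[where f=uminus], rule sum.mono_neutral_left) (use assms in \<open>auto simp: cellp_empty\<close>)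

lemma part_entropy_image:
  assumes "finite L" "g ` space M \<subseteq> L"
  shows "part_entropy M (cellp M g ` L) = Ent M g"
proof -
  have "(\<Sum>A\<in>cellp M g ` L. if measure M A = 0 then 0 else measure M A * ln (measure M A))
     = (\<Sum>A\<in>cellp M g ` L. measure M A * ln (measure M A))"
    by (rule sum.cong) auto
  also have "\<dots> = (\<Sum>l\<in>L. measure M (cellp M g l) * ln (measure M (cellp M g l)))"
  proof (subst sum.reindex_nontrivial[OF assms(1)])
    fix x y assume "x \<in> L" "y \<in> L" "x \<noteq> y" "cellp M g x = cellp M g y"
    then have "cellp M g x = {}" unfolding cellp_def by auto
    then show "measure M (cellp M g x) * ln (measure M (cellp M g x)) = 0" by simp
  qed simp
  finally show ?thesis unfolding part_entropy_def using ent_superset[OF assms] by simp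
qed

lemma Ent_cong:
  assumes "\<And>\<omega>. \<omega> \<in> space M \<Longrightarrow> g \<omega> = g' \<omega>"
  shows "Ent M g = Ent M g'"
proof -
  have "g ` space M = g' ` space M" using assms by auto
  moreover have "cellp M g = cellp M g'" using assms unfolding cellp_def by auto
  ultimately show ?thesis unfolding Ent_def by simp
qed

lemma good_cong:
  assumes "\<And>\<omega>. \<omega> \<in> space M \<Longrightarrow> g \<omega> = g' \<omega>" "good M g"
  shows "good M g'"
proof -
  have "g ` space M = g' ` space M" using assms by auto
  moreover have "cellp M g = cellp M g'" using assms unfolding cellp_def by auto
  ultimately show ?thesis using assms(2) unfolding good_def by simp
qed

lemma Ent_relabel:
  assumes "inj_on h (g ` space M)"
  shows "Ent M (\<lambda>\<omega>. h (g \<omega>)) = Ent M g"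
proof -
  have img: "(\<lambda>\<omega>. h (g \<omega>)) ` space M = h ` (g ` space M)" by auto
  have c: "cellp M (\<lambda>\<omega>. h (g \<omega>)) (h l) = cellp M g l" if "l \<in> g ` space M" for l
    using assms that unfolding cellp_def inj_on_def by auto
  show ?thesis unfolding Ent_def img
    by (subst sum.reindex[OF assms]) (simp add: c)
qed

lemma good_comp:
  assumes "good M g"
  shows "good M (\<lambda>\<omega>. h (g \<omega>))"
proof -
  have img: "(\<lambda>\<omega>. h (g \<omega>)) ` space M = h ` (g ` space M)" by auto
  have "cellp M (\<lambda>\<omega>. h (g \<omega>)) c = (\<Union>l\<in>{l \<in> g ` space M. h l = c}. cellp M g l)" for c
    unfolding cellp_def by auto
  moreover have "(\<Union>l\<in>{l \<in> g ` space M. h l = c}. cellp M g l) \<in> sets M" for c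
    using assms unfolding good_def by (intro sets.finite_UN) auto
  ultimately show ?thesis using assms unfolding good_def img by auto
qed

lemma good_pair:
  assumes "good M q" "good M s"
  shows "good M (\<lambda>\<omega>. (q \<omega>, s \<omega>))"
proof -
  have "(\<lambda>\<omega>. (q \<omega>, s \<omega>)) ` space M \<subseteq> q ` space M \<times> s ` space M" by auto
  moreover have "cellp M (\<lambda>\<omega>. (q \<omega>, s \<omega>)) (a, b) = cellp M q a \<inter> cellp M s b" for a b
    unfolding cellp_def by auto
  ultimately show ?thesis using assms unfolding good_def
    by (auto intro: finite_subset[where B="q ` space M \<times> s ` space M"])
qed

lemma measure_cell_Union:
  assumes "prob_space M" "good M g" "finite B"
  shows "measure M (\<Union>b\<in>B. cellp M g b) = (\<Sum>b\<in>B. measure M (cellp M g b))"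
proof (rule measure_finite_Union)
  show "cellp M g ` B \<subseteq> sets M" using assms unfolding good_def by auto
  show "disjoint_family_on (cellp M g) B" unfolding disjoint_family_on_def cellp_def by auto
  show "emeasure M (cellp M g i) \<noteq> \<infinity>" for i
    using assms(1) by (simp add: finite_measure.emeasure_finite prob_space_def)
qed (use assms in auto)

lemma Ent_pair:
  assumes P: "prob_space M" and q: "good M q" and s: "good M s"
  shows "Ent M (\<lambda>\<omega>. (q \<omega>, s \<omega>)) - Ent M s =
    (\<Sum>b\<in>s ` space M. \<Sum>a\<in>q ` space M. psi (measure M (cellp M (\<lambda>\<omega>. (q \<omega>, s \<omega>)) (a, b))) (measure M (cellp M s b)))"
proof -
  let ?p = "\<lambda>\<omega>. (q \<omega>, s \<omega>)"
  define Q where "Q = q ` space M"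
  define S where "S = s ` space M"
  define x where "x a b = measure M (cellp M ?p (a, b))" for a b
  define y where "y b = measure M (cellp M s b)" for b
  have fQ: "finite Q" and fS: "finite S" using q s unfolding good_def Q_def S_def by auto
  have gp: "good M ?p" using good_pair[OF q s] .
  have y: "y b = (\<Sum>a\<in>Q. x a b)" for b
  proof -
    have "cellp M s b = (\<Union>l\<in>Q \<times> {b}. cellp M ?p l)" unfolding cellp_def Q_def by auto
    then have "y b = (\<Sum>l\<in>Q \<times> {b}. measure M (cellp M ?p l))"
      unfolding y_def using measure_cell_Union[OF P gp] fQ by simp
    also have "\<dots> = (\<Sum>a\<in>Q. x a b)" unfolding x_def
      by (rule sum.reindex_bij_witness[where i="\<lambda>a. (a, b)" and j=fst]) auto
    finally show ?thesis .
  qed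
  have "Ent M ?p = - (\<Sum>l\<in>Q \<times> S. measure M (cellp M ?p l) * ln (measure M (cellp M ?p l)))"
    by (rule ent_superset) (use fQ fS Q_def S_def in auto)
  also have "\<dots> = - (\<Sum>b\<in>S. \<Sum>a\<in>Q. x a b * ln (x a b))"
  proof -
    have "(\<Sum>l\<in>Q \<times> S. measure M (cellp M ?p l) * ln (measure M (cellp M ?p l)))
        = (\<Sum>a\<in>Q. \<Sum>b\<in>S. x a b * ln (x a b))"
      unfolding x_def sum.cartesian_product by (simp add: case_prod_beta)
    also have "\<dots> = (\<Sum>b\<in>S. \<Sum>a\<in>Q. x a b * ln (x a b))" by (rule sum.swap)
    finally show ?thesis by simp
  qed
  finally have E1: "Ent M ?p = - (\<Sum>b\<in>S. \<Sum>a\<in>Q. x a b * ln (x a b))" .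
  have E2: "Ent M s = - (\<Sum>b\<in>S. y b * ln (y b))" unfolding Ent_def S_def y_def by simp
  have "(\<Sum>a\<in>Q. psi (x a b) (y b)) = y b * ln (y b) - (\<Sum>a\<in>Q. x a b * ln (x a b))" for b
    unfolding psi_def by (simp add: sum_subtractf sum_distrib_right[symmetric] y[symmetric])
  then show ?thesis unfolding E1 E2 Q_def[symmetric] S_def[symmetric] x_def[symmetric] y_def[symmetric]
    by (simp add: sum_subtractf)
qed

lemma Ent_pair_nonneg:
  assumes P: "prob_space M" and q: "good M q" and s: "good M s"
  shows "Ent M s \<le> Ent M (\<lambda>\<omega>. (q \<omega>, s \<omega>))"
proof -
  let ?p = "\<lambda>\<omega>. (q \<omega>, s \<omega>)"
  have gp: "good M ?p" using good_pair[OF q s] .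
  have "0 \<le> psi (measure M (cellp M ?p (a, b))) (measure M (cellp M s b))" for a b
  proof (rule psi_nonneg)
    have "cellp M ?p (a, b) \<subseteq> cellp M s b" unfolding cellp_def by auto
    then show "measure M (cellp M ?p (a, b)) \<le> measure M (cellp M s b)"
      using P s gp unfolding good_def by (intro finite_measure.finite_measure_mono) (auto simp: prob_space_def)
  qed simp
  then have "0 \<le> Ent M ?p - Ent M s" unfolding Ent_pair[OF assms] by (intro sum_nonneg) auto
  then show ?thesis by simp
qed

lemma Ent_mono:
  assumes P: "prob_space M" and s: "good M s" and r: "\<And>\<omega>. \<omega> \<in> space M \<Longrightarrow> r \<omega> = f (s \<omega>)"
  shows "Ent M r \<le> Ent M s"
proof -
  have gr: "good M r" using good_cong[OF _ good_comp[OF s]] r by metis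
  have "Ent M r \<le> Ent M (\<lambda>\<omega>. (s \<omega>, r \<omega>))" by (rule Ent_pair_nonneg[OF P s gr])
  also have "Ent M (\<lambda>\<omega>. (s \<omega>, r \<omega>)) = Ent M (\<lambda>\<omega>. (\<lambda>b. (b, f b)) (s \<omega>))"
    by (rule Ent_cong) (simp add: r)
  also have "\<dots> = Ent M s" by (rule Ent_relabel) (auto simp: inj_on_def)
  finally show ?thesis .
qed

lemma Ent_cond_mono:
  assumes P: "prob_space M" and q: "good M q" and s: "good M s"
    and r: "\<And>\<omega>. \<omega> \<in> space M \<Longrightarrow> r \<omega> = f (s \<omega>)"
  shows "Ent M (\<lambda>\<omega>. (q \<omega>, s \<omega>)) - Ent M s \<le> Ent M (\<lambda>\<omega>. (q \<omega>, r \<omega>)) - Ent M r"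
proof -
  let ?p = "\<lambda>\<omega>. (q \<omega>, s \<omega>)"
  let ?pr = "\<lambda>\<omega>. (q \<omega>, r \<omega>)"
  have gr: "good M r" using good_cong[OF _ good_comp[OF s]] r by metis
  define Q where "Q = q ` space M"
  define S where "S = s ` space M"
  define G where "G c = {b \<in> S. f b = c}" for c
  define x where "x a b = measure M (cellp M ?p (a, b))" for a b
  define y where "y b = measure M (cellp M s b)" for b
  have fQ: "finite Q" and fS: "finite S" using q s unfolding good_def Q_def S_def by auto
  have fG: "finite (G c)" for c using fS unfolding G_def by auto
  have gp: "good M ?p" using good_pair[OF q s] .
  have R: "r ` space M = f ` S" unfolding S_def using r by force
  have x0: "0 \<le> x a b" for a b unfolding x_def by simp
  have xy: "x a b \<le> y b" for a b
  proof -
    have "cellp M ?p (a, b) \<subseteq> cellp M s b" unfolding cellp_def by auto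
    then show ?thesis unfolding x_def y_def
      using P s gp unfolding good_def by (intro finite_measure.finite_measure_mono) (auto simp: prob_space_def)
  qed
  have z: "measure M (cellp M ?pr (a, c)) = (\<Sum>b\<in>G c. x a b)" for a c
  proof -
    have "cellp M ?pr (a, c) = (\<Union>l\<in>{a} \<times> G c. cellp M ?p l)"
      unfolding cellp_def G_def S_def using r by auto
    then have "measure M (cellp M ?pr (a, c)) = (\<Sum>l\<in>{a} \<times> G c. measure M (cellp M ?p l))"
      using measure_cell_Union[OF P gp] fG by simp
    also have "\<dots> = (\<Sum>b\<in>G c. x a b)" unfolding x_def
      by (rule sum.reindex_bij_witness[where i="\<lambda>b. (a, b)" and j=snd]) auto
    finally show ?thesis .
  qed
  have w: "measure M (cellp M r c) = (\<Sum>b\<in>G c. y b)" for c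
  proof -
    have "cellp M r c = (\<Union>b\<in>G c. cellp M s b)"
      unfolding cellp_def G_def S_def using r by auto
    then show ?thesis unfolding y_def using measure_cell_Union[OF P s] fG by simp
  qed
  have "Ent M ?p - Ent M s = (\<Sum>b\<in>S. \<Sum>a\<in>Q. psi (x a b) (y b))"
    unfolding Ent_pair[OF P q s] S_def Q_def x_def y_def ..
  also have "\<dots> = (\<Sum>c\<in>f ` S. \<Sum>b\<in>G c. \<Sum>a\<in>Q. psi (x a b) (y b))"
    unfolding G_def by (rule sum.image_gen[OF fS])
  also have "\<dots> = (\<Sum>c\<in>f ` S. \<Sum>a\<in>Q. \<Sum>b\<in>G c. psi (x a b) (y b))"
    by (rule sum.cong[OF refl], rule sum.swap)
  also have "\<dots> \<le> (\<Sum>c\<in>f ` S. \<Sum>a\<in>Q. psi (\<Sum>b\<in>G c. x a b) (\<Sum>b\<in>G c. y b))"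
    by (intro sum_mono log_sum fG x0 xy)
  also have "\<dots> = (\<Sum>c\<in>r ` space M. \<Sum>a\<in>q ` space M. psi (measure M (cellp M ?pr (a, c))) (measure M (cellp M r c)))"
    unfolding R Q_def[symmetric] z w ..
  also have "\<dots> = Ent M ?pr - Ent M r"
    unfolding Ent_pair[OF P q gr] ..
  finally show ?thesis .
qed

lemma Ent_T:
  assumes sys: "mpds M T" and g: "good M g"
  shows "Ent M (\<lambda>\<omega>. g (T \<omega>)) = Ent M g" and "good M (\<lambda>\<omega>. g (T \<omega>))"
proof -
  have Tm: "T \<in> measurable M M" using sys unfolding mpds_def by auto
  have c: "cellp M (\<lambda>\<omega>. g (T \<omega>)) l = T -` cellp M g l \<inter> space M" for l
    unfolding cellp_def using measurable_space[OF Tm] by auto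
  have cs: "cellp M g l \<in> sets M" for l using g unfolding good_def by auto
  have m: "measure M (cellp M (\<lambda>\<omega>. g (T \<omega>)) l) = measure M (cellp M g l)" for l
    unfolding c using sys cs unfolding mpds_def by auto
  have img: "(\<lambda>\<omega>. g (T \<omega>)) ` space M \<subseteq> g ` space M" using measurable_space[OF Tm] by auto
  have fin: "finite (g ` space M)" using g unfolding good_def by auto
  show "Ent M (\<lambda>\<omega>. g (T \<omega>)) = Ent M g"
    unfolding ent_superset[OF fin img] m by (simp add: Ent_def)
  show "good M (\<lambda>\<omega>. g (T \<omega>))" unfolding good_def c
    using finite_subset[OF img fin] measurable_sets[OF Tm cs] by auto
qed

definition prel :: "(nat \<Rightarrow> real) \<Rightarrow> nat \<Rightarrow> nat \<Rightarrow> bool" where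
  "prel x a b \<longleftrightarrow> x b < x a \<or> (x b = x a \<and> b < a)"

definition PAT :: "(nat \<Rightarrow> real) \<Rightarrow> nat \<Rightarrow> nat list" where
  "PAT x d = rev (sort_key (\<lambda>a. [x a, real a]) [0..<Suc d])"

lemma prel_fun: "prel x = (\<lambda>a b. x b < x a \<or> (x b = x a \<and> b < a))"
  by (auto simp: fun_eq_iff prel_def)

lemma key_less: "([x b, real b] < [x a, real a]) \<longleftrightarrow> prel x a b"
  unfolding prel_def by auto

lemma perms_length: "r \<in> perms d \<Longrightarrow> length r = Suc d"
  unfolding perms_def using distinct_card[of r] by auto

lemma ord_iff:
  "has_ord_pattern x d r \<longleftrightarrow> r \<in> perms d \<and> sorted_wrt (prel x) r"
proof (cases "r \<in> perms d")
  case True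
  have len: "length r = Suc d" using perms_length[OF True] .
  have tr: "transp (prel x)" by (auto simp: transp_def prel_def)
  have "sorted_wrt (prel x) r \<longleftrightarrow>
     (\<forall>i. Suc i < length r \<longrightarrow> prel x (r ! i) (r ! Suc i))"
    by (rule sorted_wrt_iff_nth_Suc_transp[OF tr])
  also have "\<dots> \<longleftrightarrow> (\<forall>l\<in>{1..d}. x (r ! (l - 1)) \<ge> x (r ! l) \<and>
                 (x (r ! (l - 1)) = x (r ! l) \<longrightarrow> r ! (l - 1) > r ! l))"
  proof -
    have "(\<forall>i. Suc i < length r \<longrightarrow> prel x (r ! i) (r ! Suc i))
       \<longleftrightarrow> (\<forall>i<d. prel x (r ! i) (r ! Suc i))" using len by auto
    also have "\<dots> \<longleftrightarrow> (\<forall>l\<in>{1..d}. prel x (r ! (l-1)) (r ! l))"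
    proof
      assume A: "\<forall>i<d. prel x (r ! i) (r ! Suc i)"
      show "\<forall>l\<in>{1..d}. prel x (r ! (l-1)) (r ! l)"
      proof
        fix l assume "l \<in> {1..d}"
        then obtain i where "l = Suc i" "i < d" by (cases l) auto
        then show "prel x (r ! (l-1)) (r ! l)" using A by auto
      qed
    next
      assume A: "\<forall>l\<in>{1..d}. prel x (r ! (l-1)) (r ! l)"
      show "\<forall>i<d. prel x (r ! i) (r ! Suc i)"
      proof (intro allI impI)
        fix i assume "i < d"
        then show "prel x (r ! i) (r ! Suc i)" using A[rule_format, of "Suc i"] by auto
      qed
    qed
    also have "\<dots> \<longleftrightarrow> (\<forall>l\<in>{1..d}. x (r ! (l - 1)) \<ge> x (r ! l) \<and>
                 (x (r ! (l - 1)) = x (r ! l) \<longrightarrow> r ! (l - 1) > r ! l))"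
      by (auto simp: prel_def)
    finally show ?thesis .
  qed
  finally show ?thesis using True unfolding has_ord_pattern_def by simp
qed (simp add: has_ord_pattern_def)

lemma inj_key: "inj (\<lambda>a::nat. [x a, real a])" by (auto simp: inj_def)

lemma ord_unique:
  assumes "r \<in> perms d" "sorted_wrt (prel x) r"
    "r' \<in> perms d" "sorted_wrt (prel x) r'"
  shows "r = r'"
proof -
  let ?k = "\<lambda>a::nat. [x a, real a]"
  have s: "sorted_wrt (<) (map ?k (rev r))" "sorted_wrt (<) (map ?k (rev r'))"
    using assms by (simp_all add: sorted_wrt_map sorted_wrt_rev prel_fun)
  have "map ?k (rev r) = map ?k (rev r')"
    using s assms(1,3) unfolding strict_sorted_iff perms_def
    by (intro sorted_distinct_set_unique) auto
  then show ?thesis using inj_key[of x] by simp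
qed

lemma PAT_ok: "PAT x d \<in> perms d \<and> sorted_wrt (prel x) (PAT x d)"
proof -
  let ?k = "\<lambda>a::nat. [x a, real a]"
  let ?L = "sort_key ?k [0..<Suc d]"
  have "distinct (map ?k ?L)"
    using inj_key[of x] by (simp add: distinct_map inj_on_def)
  then have "sorted_wrt (<) (map ?k ?L)" by (simp add: strict_sorted_iff)
  then have "sorted_wrt (\<lambda>a b. ?k a < ?k b) ?L" by (simp add: sorted_wrt_map)
  then show ?thesis unfolding PAT_def perms_def by (auto simp: sorted_wrt_rev prel_def)
qed

lemma ord_iff_PAT: "has_ord_pattern x d r \<longleftrightarrow> r = PAT x d"
  using ord_iff ord_unique PAT_ok by metis

lemma PAT_perms: "PAT x d \<in> perms d" using PAT_ok by blast

lemma PAT_cong: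
  assumes "\<And>k. k \<le> d \<Longrightarrow> x k = x' k"
  shows "PAT x d = PAT x' d"
proof -
  have ok: "PAT x d \<in> perms d" "sorted_wrt (prel x) (PAT x d)" using PAT_ok by auto
  have "sorted_wrt (prel x') (PAT x d)"
    by (rule sorted_wrt_mono_rel[OF _ ok(2)]) (use ok(1) assms in \<open>auto simp: perms_def prel_def\<close>)
  then show ?thesis using ord_unique ok(1) PAT_ok by metis
qed

lemma PAT_prefix: "PAT x d = filter (\<lambda>a. a \<le> d) (PAT x (Suc d))"
proof -
  have ok: "PAT x (Suc d) \<in> perms (Suc d)" "sorted_wrt (prel x) (PAT x (Suc d))"
    using PAT_ok by auto
  have "filter (\<lambda>a. a \<le> d) (PAT x (Suc d)) \<in> perms d"
    using ok(1) unfolding perms_def by auto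
  moreover have "sorted_wrt (prel x) (filter (\<lambda>a. a \<le> d) (PAT x (Suc d)))"
    using ok(2) by (simp add: sorted_wrt_filter)
  ultimately show ?thesis using ord_unique PAT_ok by metis
qed

lemma PAT_shift: "PAT (\<lambda>k. x (Suc k)) d = map (\<lambda>a. a - 1) (filter (\<lambda>a. 0 < a) (PAT x (Suc d)))"
proof -
  have ok: "PAT x (Suc d) \<in> perms (Suc d)" "sorted_wrt (prel x) (PAT x (Suc d))"
    using PAT_ok by auto
  let ?F = "filter (\<lambda>a. 0 < a) (PAT x (Suc d))"
  have inj: "inj_on (\<lambda>a. a - 1) (set ?F)" by (auto simp: inj_on_def)
  have "set (map (\<lambda>a. a - 1) ?F) = (\<lambda>a. a - 1) ` {1..Suc d}"
    using ok(1) unfolding perms_def by (auto simp: atLeastAtMost_iff)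
  also have "\<dots> = {0..d}"
  proof (rule set_eqI)
    fix k
    show "k \<in> (\<lambda>a. a - 1) ` {1..Suc d} \<longleftrightarrow> k \<in> {0..d}"
    proof
      assume "k \<in> {0..d}"
      then show "k \<in> (\<lambda>a. a - 1) ` {1..Suc d}" by (intro image_eqI[where x="Suc k"]) auto
    qed auto
  qed
  finally have "map (\<lambda>a. a - 1) ?F \<in> perms d"
    using ok(1) inj unfolding perms_def by (simp add: distinct_map)
  moreover have "sorted_wrt (prel (\<lambda>k. x (Suc k))) (map (\<lambda>a. a - 1) ?F)"
  proof -
    have "sorted_wrt (prel x) ?F" using ok(2) by (simp add: sorted_wrt_filter)
    then have "sorted_wrt (\<lambda>a b. prel (\<lambda>k. x (Suc k)) (a - 1) (b - 1)) ?F"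
      by (rule sorted_wrt_mono_rel[rotated]) (auto simp: prel_def)
    then show ?thesis by (simp add: sorted_wrt_map)
  qed
  ultimately show ?thesis using ord_unique PAT_ok by metis
qed

abbreviation "mpred M P \<equiv> P \<in> measurable M (count_space (UNIV::bool set))"

lemma funpow_meas: "T \<in> measurable M M \<Longrightarrow> (T ^^ n) \<in> measurable M M"
  by (induction n) (auto intro: measurable_comp)

definition pat :: "('a \<Rightarrow> 'a) \<Rightarrow> ('n::finite \<Rightarrow> 'a \<Rightarrow> real) \<Rightarrow> nat \<Rightarrow> 'a \<Rightarrow> ('n \<Rightarrow> nat list)" where
  "pat T X d \<omega> = (\<lambda>i. PAT (\<lambda>k. X i ((T ^^ (d - k)) \<omega>)) d)"

definition Lab :: "nat \<Rightarrow> ('n::finite \<Rightarrow> nat list) set" where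
  "Lab d = {\<pi>. \<forall>i. \<pi> i \<in> perms d}"

lemma finite_perms: "finite (perms d)"
proof (rule finite_subset)
  show "perms d \<subseteq> {xs. set xs \<subseteq> {0..d} \<and> length xs = Suc d}"
    using perms_length unfolding perms_def by auto
qed (rule finite_lists_length_eq, simp)

lemma finite_Lab: "finite (Lab d :: ('n::finite \<Rightarrow> nat list) set)"
proof -
  have "(Lab d :: ('n::finite \<Rightarrow> nat list) set) = PiE UNIV (\<lambda>_. perms d)" unfolding Lab_def PiE_def by auto
  moreover have "finite (perms d)" by (rule finite_perms)
  ultimately show ?thesis by (simp add: finite_PiE)
qed

lemma pat_Lab: "pat T X d \<omega> \<in> Lab d"
  unfolding pat_def Lab_def using PAT_perms by auto

lemma pred_ord:
  assumes m: "\<And>k. v k \<in> borel_measurable M"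
  shows "mpred M (\<lambda>\<omega>. has_ord_pattern (\<lambda>k. v k \<omega>) d r)"
proof -
  have c: "mpred M (\<lambda>\<omega>. c)" for c by (rule measurable_const) simp
  show ?thesis
proof (cases "r \<in> perms d")
  case False
  then show ?thesis using c[of False] by (simp add: has_ord_pattern_def)
next
  case True
  have le: "mpred M (\<lambda>\<omega>. v a \<omega> \<le> v b \<omega>)" for a b
    unfolding Measurable.pred_def by (intro borel_measurable_le m)
  have eq: "mpred M (\<lambda>\<omega>. v a \<omega> = v b \<omega>)" for a b
    unfolding Measurable.pred_def by (intro borel_measurable_eq m)
  have "mpred M (\<lambda>\<omega>. \<forall>l\<in>{1..d}. v (r ! (l - 1)) \<omega> \<ge> v (r ! l) \<omega> \<and>
                 (v (r ! (l - 1)) \<omega> = v (r ! l) \<omega> \<longrightarrow> r ! (l - 1) > r ! l))"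
  proof (rule pred_intros_finite(3))
    fix l
    show "mpred M (\<lambda>\<omega>. v (r ! (l - 1)) \<omega> \<ge> v (r ! l) \<omega> \<and>
                 (v (r ! (l - 1)) \<omega> = v (r ! l) \<omega> \<longrightarrow> r ! (l - 1) > r ! l))"
      by (rule pred_intros_logic(3)[OF le pred_intros_logic(4)[OF eq c]])
  qed simp
  then show ?thesis using True unfolding has_ord_pattern_def by simp
qed
qed

lemma good_pat:
  assumes sys: "mpds M T" and Xm: "\<And>i. X i \<in> borel_measurable M"
  shows "good M (pat T X d)"
proof -
  have Tm: "T \<in> measurable M M" using sys unfolding mpds_def by auto
  have mX: "(\<lambda>\<omega>. X i ((T ^^ m) \<omega>)) \<in> borel_measurable M" for i m
    using measurable_comp[OF funpow_meas[OF Tm] Xm] by (simp add: comp_def)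
  have fin: "finite (pat T X d ` space M)"
    by (rule finite_subset[OF _ finite_Lab[of d]]) (auto simp: pat_Lab)
  have "cellp M (pat T X d) \<pi> \<in> sets M" for \<pi>
  proof -
    have "cellp M (pat T X d) \<pi> = {\<omega> \<in> space M. \<forall>i\<in>UNIV. has_ord_pattern (\<lambda>k. X i ((T ^^ (d - k)) \<omega>)) d (\<pi> i)}"
      unfolding cellp_def pat_def ord_iff_PAT fun_eq_iff by (intro Collect_cong) auto
    also have "\<dots> \<in> sets M"
    proof -
      have "mpred M (\<lambda>\<omega>. \<forall>i\<in>UNIV. has_ord_pattern (\<lambda>k. X i ((T ^^ (d - k)) \<omega>)) d (\<pi> i))"
        by (rule pred_intros_finite(3)[OF _ pred_ord[OF mX]]) simp
      then show ?thesis unfolding Measurable.pred_def .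
    qed
    finally show ?thesis .
  qed
  then show ?thesis using fin unfolding good_def by auto
qed

lemma ord_part_eq: "ord_part M T X d = cellp M (pat T X d) ` Lab d"
proof -
  have e: "{\<omega> \<in> space M. \<forall>i. has_ord_pattern (\<lambda>k. X i ((T ^^ (d - k)) \<omega>)) d (\<pi> i)} = cellp M (pat T X d) \<pi>" for \<pi>
    unfolding cellp_def pat_def ord_iff_PAT fun_eq_iff by (intro Collect_cong) auto
  show ?thesis unfolding ord_part_def Lab_def e by blast
qed

fun GG :: "('a \<Rightarrow> 'a) \<Rightarrow> ('n::finite \<Rightarrow> 'a \<Rightarrow> real) \<Rightarrow> nat \<Rightarrow> nat \<Rightarrow> 'a \<Rightarrow> ('n \<Rightarrow> nat list) list" where
  "GG T X d 0 \<omega> = []"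
| "GG T X d (Suc n) \<omega> = pat T X d \<omega> # GG T X d n (T \<omega>)"

lemma funpow_Suc_app: "(T ^^ Suc j) \<omega> = (T ^^ j) (T \<omega>)"
  by (simp only: funpow_Suc_right comp_def)

lemma GG_map: "GG T X d n \<omega> = map (\<lambda>j. pat T X d ((T ^^ j) \<omega>)) [0..<n]"
proof (induction n arbitrary: \<omega>)
  case (Suc n)
  have "map (\<lambda>j. pat T X d ((T ^^ j) \<omega>)) [0..<Suc n] = pat T X d \<omega> # map (\<lambda>j. pat T X d ((T ^^ Suc j) \<omega>)) [0..<n]"
    by (simp only: map_upt_Suc) simp
  also have "\<dots> = pat T X d \<omega> # map (\<lambda>j. pat T X d ((T ^^ j) (T \<omega>))) [0..<n]"
    by (simp only: funpow_Suc_app)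
  finally show ?case using Suc by simp
qed simp
lemma GG_take: "GG T X d n \<omega> = take n (GG T X d (Suc n) \<omega>)"
proof (induction n arbitrary: \<omega>)
  case 0
  show ?case by (simp only: GG.simps take_0)
next
  case (Suc n)
  show ?case by (simp only: GG.simps take_Suc_Cons Suc[of "T \<omega>"])
qed

lemma refine_eq:
  assumes Tm: "T \<in> measurable M M"
  shows "refine_part M T (ord_part M T X d) n = cellp M (GG T X d n) ` {l. set l \<subseteq> Lab d \<and> length l = n}"
proof -
  have sp: "\<omega> \<in> space M \<Longrightarrow> (T ^^ j) \<omega> \<in> space M" for \<omega> j
    using measurable_space[OF funpow_meas[OF Tm]] .
  have cell: "cellp M (GG T X d n) l = {\<omega> \<in> space M. \<forall>j<n. pat T X d ((T ^^ j) \<omega>) = l ! j}"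
    if "length l = n" for l
    unfolding cellp_def GG_map using that by (intro Collect_cong) (auto simp: list_eq_iff_nth_eq)
  show ?thesis unfolding refine_part_def ord_part_eq
  proof (intro set_eqI iffI)
    fix A assume "A \<in> {(\<Inter>j<n. (T ^^ j) -` a j) \<inter> space M |a. \<forall>j<n. a j \<in> cellp M (pat T X d) ` Lab d}"
    then obtain a where A: "A = (\<Inter>j<n. (T ^^ j) -` a j) \<inter> space M" and a: "\<forall>j<n. a j \<in> cellp M (pat T X d) ` Lab d"
      by blast
    define l where "l = map (\<lambda>j. SOME \<pi>. \<pi> \<in> Lab d \<and> a j = cellp M (pat T X d) \<pi>) [0..<n]"
    have l: "l ! j \<in> Lab d \<and> a j = cellp M (pat T X d) (l ! j)" if "j < n" for j
    proof -
      have "\<exists>\<pi>. \<pi> \<in> Lab d \<and> a j = cellp M (pat T X d) \<pi>" using a that by blast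
      from someI_ex[OF this] show ?thesis unfolding l_def using that by simp
    qed
    have ll: "length l = n" unfolding l_def by simp
    have "set l \<subseteq> Lab d" using l ll by (auto simp: in_set_conv_nth)
    moreover have "A = cellp M (GG T X d n) l"
      unfolding cell[OF ll] A
    proof (intro set_eqI)
      fix \<omega>
      have "\<omega> \<in> (\<Inter>j<n. (T ^^ j) -` a j) \<inter> space M \<longleftrightarrow> \<omega> \<in> space M \<and> (\<forall>j<n. (T ^^ j) \<omega> \<in> a j)"
        by blast
      also have "\<dots> \<longleftrightarrow> \<omega> \<in> space M \<and> (\<forall>j<n. pat T X d ((T ^^ j) \<omega>) = l ! j)"
        using l sp unfolding cellp_def by blast
      finally show "\<omega> \<in> (\<Inter>j<n. (T ^^ j) -` a j) \<inter> space M \<longleftrightarrow> \<omega> \<in> {\<omega> \<in> space M. \<forall>j<n. pat T X d ((T ^^ j) \<omega>) = l ! j}"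
        by simp
    qed
    ultimately show "A \<in> cellp M (GG T X d n) ` {l. set l \<subseteq> Lab d \<and> length l = n}" using ll by blast
  next
    fix A assume "A \<in> cellp M (GG T X d n) ` {l. set l \<subseteq> Lab d \<and> length l = n}"
    then obtain l where A: "A = cellp M (GG T X d n) l" and l: "set l \<subseteq> Lab d" "length l = n" by blast
    define a where "a j = cellp M (pat T X d) (l ! j)" for j
    have "\<forall>j<n. a j \<in> cellp M (pat T X d) ` Lab d" unfolding a_def using l by (metis image_eqI nth_mem subsetD)
    moreover have "A = (\<Inter>j<n. (T ^^ j) -` a j) \<inter> space M"
      unfolding A cell[OF l(2)]
    proof (intro set_eqI)
      fix \<omega>
      have "\<omega> \<in> (\<Inter>j<n. (T ^^ j) -` a j) \<inter> space M \<longleftrightarrow> \<omega> \<in> space M \<and> (\<forall>j<n. (T ^^ j) \<omega> \<in> a j)"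
        by blast
      also have "\<dots> \<longleftrightarrow> \<omega> \<in> space M \<and> (\<forall>j<n. pat T X d ((T ^^ j) \<omega>) = l ! j)"
        using sp unfolding cellp_def a_def by blast
      finally show "\<omega> \<in> {\<omega> \<in> space M. \<forall>j<n. pat T X d ((T ^^ j) \<omega>) = l ! j} \<longleftrightarrow> \<omega> \<in> (\<Inter>j<n. (T ^^ j) -` a j) \<inter> space M"
        by simp
    qed
    ultimately show "A \<in> {(\<Inter>j<n. (T ^^ j) -` a j) \<inter> space M |a. \<forall>j<n. a j \<in> cellp M (pat T X d) ` Lab d}"
      by blast
  qed
qed

lemma good_GG:
  assumes sys: "mpds M T" and Xm: "\<And>i. X i \<in> borel_measurable M"
  shows "good M (GG T X d n)"
proof (induction n)
  case 0
  have "good M (\<lambda>\<omega>. (\<lambda>_. [] :: ('b \<Rightarrow> nat list) list) (pat T X d \<omega>))"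
    by (rule good_comp[OF good_pat[OF sys Xm]])
  then show ?case by (rule good_cong[rotated]) simp
next
  case (Suc n)
  have "good M (\<lambda>\<omega>. (\<lambda>(a, l). a # l) (pat T X d \<omega>, GG T X d n (T \<omega>)))"
    by (rule good_comp[OF good_pair[OF good_pat[OF sys Xm] Ent_T(2)[OF sys Suc]]])
  then show ?case by (rule good_cong[rotated]) simp
qed

lemma Ent_GG_Suc:
  "Ent M (GG T X d (Suc n)) = Ent M (\<lambda>\<omega>. (pat T X d \<omega>, GG T X d n (T \<omega>)))"
proof -
  have "Ent M (GG T X d (Suc n)) = Ent M (\<lambda>\<omega>. (\<lambda>(a, l). a # l) (pat T X d \<omega>, GG T X d n (T \<omega>)))"
    by (rule Ent_cong) simp
  also have "\<dots> = Ent M (\<lambda>\<omega>. (pat T X d \<omega>, GG T X d n (T \<omega>)))"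
    by (rule Ent_relabel) (auto simp: inj_on_def)
  finally show ?thesis .
qed

definition DD where "DD M T X d n = Ent M (GG T X d (Suc n)) - Ent M (GG T X d n)"

lemma DD_alt:
  assumes sys: "mpds M T" and Xm: "\<And>i. X i \<in> borel_measurable M"
  shows "DD M T X d n = Ent M (\<lambda>\<omega>. (pat T X d \<omega>, GG T X d n (T \<omega>))) - Ent M (\<lambda>\<omega>. GG T X d n (T \<omega>))"
  unfolding DD_def Ent_GG_Suc Ent_T(1)[OF sys good_GG[OF sys Xm]] ..

lemma DD_dec:
  assumes sys: "mpds M T" and Xm: "\<And>i. X i \<in> borel_measurable M"
  shows "DD M T X d (Suc n) \<le> DD M T X d n"
  unfolding DD_alt[OF sys Xm]
proof (rule Ent_cond_mono)
  show "prob_space M" using sys unfolding mpds_def by auto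
  show "good M (pat T X d)" by (rule good_pat[OF sys Xm])
  show "good M (\<lambda>\<omega>. GG T X d (Suc n) (T \<omega>))" by (rule Ent_T(2)[OF sys good_GG[OF sys Xm]])
  show "GG T X d n (T \<omega>) = take n (GG T X d (Suc n) (T \<omega>))" for \<omega> by (rule GG_take)
qed

lemma DD_nonneg:
  assumes sys: "mpds M T" and Xm: "\<And>i. X i \<in> borel_measurable M"
  shows "0 \<le> DD M T X d n"
proof -
  have "Ent M (\<lambda>\<omega>. GG T X d n (T \<omega>)) \<le> Ent M (\<lambda>\<omega>. (pat T X d \<omega>, GG T X d n (T \<omega>)))"
  proof (rule Ent_pair_nonneg)
    show "prob_space M" using sys unfolding mpds_def by auto
    show "good M (pat T X d)" by (rule good_pat[OF sys Xm])
    show "good M (\<lambda>\<omega>. GG T X d n (T \<omega>))" by (rule Ent_T(2)[OF sys good_GG[OF sys Xm]])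
  qed
  then show ?thesis unfolding DD_alt[OF sys Xm] by simp
qed

lemma H_refine:
  assumes sys: "mpds M T"
  shows "part_entropy M (refine_part M T (ord_part M T X d) n) = Ent M (GG T X d n)"
proof -
  have Tm: "T \<in> measurable M M" using sys unfolding mpds_def by auto
  show ?thesis unfolding refine_eq[OF Tm]
  proof (rule part_entropy_image)
    show "finite {l. set l \<subseteq> Lab d \<and> length l = n}" by (rule finite_lists_length_eq[OF finite_Lab])
    show "GG T X d n ` space M \<subseteq> {l. set l \<subseteq> Lab d \<and> length l = n}"
      unfolding GG_map using pat_Lab by auto
  qed
qed

lemma H_ord:
  "part_entropy M (ord_part M T X d) = Ent M (pat T X d)"
  unfolding ord_part_eq
  by (rule part_entropy_image[OF finite_Lab]) (auto simp: pat_Lab)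

lemma Ent_GG1: "Ent M (GG T X d 1) = Ent M (pat T X d)"
proof -
  have "Ent M (GG T X d 1) = Ent M (\<lambda>\<omega>. (\<lambda>a. [a]) (pat T X d \<omega>))"
    by (rule Ent_cong) simp
  also have "\<dots> = Ent M (pat T X d)" by (rule Ent_relabel) (auto simp: inj_on_def)
  finally show ?thesis .
qed

lemma ent_rel_le_cond:
  assumes sys: "mpds M T" and Xm: "\<And>i. X i \<in> borel_measurable M"
  shows "ent_rel M T (ord_part M T X d) \<le> cond_entropy M T X d"
proof -
  have e: "ent_rel M T (ord_part M T X d) = lim (DD M T X d)"
    unfolding ent_rel_def H_refine[OF sys] DD_def ..
  have "decseq (DD M T X d)" using DD_dec[OF sys Xm] by (intro decseq_SucI)
  moreover have "\<forall>i. 0 \<le> DD M T X d i" using DD_nonneg[of M T X, OF sys Xm] by blast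
  ultimately obtain L where L: "DD M T X d \<longlonglongrightarrow> L" "\<forall>i. L \<le> DD M T X d i"
    by (rule decseq_convergent)
  have "lim (DD M T X d) = L" using L(1) by (rule limI)
  also have "\<dots> \<le> DD M T X d 1" using L(2) by simp
  also have "\<dots> = cond_entropy M T X d"
    unfolding DD_def cond_entropy_def H_refine[OF sys] H_ord Ent_GG1 by (simp add: numeral_2_eq_2)
  finally show ?thesis unfolding e .
qed

lemma pat_split:
  "[pat T X d \<omega>, pat T X d (T \<omega>)] =
    (\<lambda>\<pi>. [\<lambda>i. map (\<lambda>a. a - 1) (filter (\<lambda>a. 0 < a) (\<pi> i)), \<lambda>i. filter (\<lambda>a. a \<le> d) (\<pi> i)])
      (pat T X (Suc d) \<omega>)"
proof -
  have 1: "pat T X d \<omega> i = map (\<lambda>a. a - 1) (filter (\<lambda>a. 0 < a) (pat T X (Suc d) \<omega> i))" for i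
  proof -
    let ?x = "\<lambda>k. X i ((T ^^ (Suc d - k)) \<omega>)"
    have "(\<lambda>k. X i ((T ^^ (d - k)) \<omega>)) = (\<lambda>k. ?x (Suc k))" by simp
    then show ?thesis unfolding pat_def using PAT_shift[of ?x d] by simp
  qed
  have 2: "pat T X d (T \<omega>) i = filter (\<lambda>a. a \<le> d) (pat T X (Suc d) \<omega> i)" for i
  proof -
    let ?x = "\<lambda>k. X i ((T ^^ (Suc d - k)) \<omega>)"
    have "PAT (\<lambda>k. X i ((T ^^ (d - k)) (T \<omega>))) d = PAT ?x d"
    proof (rule PAT_cong)
      fix k assume "k \<le> d"
      then have "Suc d - k = Suc (d - k)" by simp
      then show "X i ((T ^^ (d - k)) (T \<omega>)) = ?x k" by (simp only: funpow_Suc_app)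
    qed
    then show ?thesis unfolding pat_def using PAT_prefix[of ?x d] by simp
  qed
  show ?thesis using 1 2 by (simp add: fun_eq_iff)
qed

lemma cond_le_sort:
  assumes sys: "mpds M T" and Xm: "\<And>i. X i \<in> borel_measurable M"
  shows "cond_entropy M T X d \<le> sorting_entropy M T X d"
proof -
  have "Ent M (GG T X d 2) \<le> Ent M (pat T X (Suc d))"
  proof (rule Ent_mono)
    show "prob_space M" using sys unfolding mpds_def by auto
    show "good M (pat T X (Suc d))" by (rule good_pat[OF sys Xm])
    fix \<omega>
    have "GG T X d 2 \<omega> = [pat T X d \<omega>, pat T X d (T \<omega>)]" by (simp add: numeral_2_eq_2)
    then show "GG T X d 2 \<omega> = (\<lambda>\<pi>. [\<lambda>i. map (\<lambda>a. a - 1) (filter (\<lambda>a. 0 < a) (\<pi> i)), \<lambda>i. filter (\<lambda>a. a \<le> d) (\<pi> i)])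
      (pat T X (Suc d) \<omega>)" using pat_split by metis
  qed
  then show ?thesis unfolding cond_entropy_def sorting_entropy_def H_refine[OF sys] H_ord by simp
qed

lemma cesaro0:
  fixes b :: "nat \<Rightarrow> real"
  assumes b: "b \<longlonglongrightarrow> 0"
  shows "(\<lambda>n. (\<Sum>k<n. b k) / real n) \<longlonglongrightarrow> 0"
proof (rule LIMSEQ_I)
  fix e :: real assume e: "0 < e"
  obtain N where N: "\<And>k. k \<ge> N \<Longrightarrow> norm (b k) < e / 2"
    using LIMSEQ_D[OF b, of "e/2"] e by auto
  define C where "C = (\<Sum>k<N. \<bar>b k\<bar>)"
  have C0: "C \<ge> 0" unfolding C_def by (simp add: sum_nonneg)
  obtain N2 :: nat where N2: "real N2 > 2 * C / e" using reals_Archimedean2 by blast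
  show "\<exists>no. \<forall>n\<ge>no. norm ((\<Sum>k<n. b k) / real n - 0) < e"
  proof (intro exI allI impI)
    fix n assume n: "n \<ge> max (max N N2) 1"
    then have nN: "N \<le> n" and npos: "real n > 0" and nN2: "real n > 2 * C / e" using N2 by auto
    have split: "(\<Sum>k<n. b k) = (\<Sum>k<N. b k) + (\<Sum>k\<in>{N..<n}. b k)"
      using nN by (metis atLeast0LessThan sum.atLeastLessThan_concat zero_le)
    have "\<bar>\<Sum>k<N. b k\<bar> \<le> C" unfolding C_def by (rule sum_abs)
    moreover have "\<bar>\<Sum>k\<in>{N..<n}. b k\<bar> \<le> (\<Sum>k\<in>{N..<n}. e / 2)"
      by (rule order_trans[OF sum_abs sum_mono]) (use N in \<open>auto intro: less_imp_le\<close>)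
    moreover have "(\<Sum>k\<in>{N..<n}. e / 2) \<le> real n * (e / 2)" using e by simp
    ultimately have "\<bar>\<Sum>k<n. b k\<bar> \<le> C + real n * (e / 2)" unfolding split by linarith
    moreover have "C < real n * (e / 2)" using nN2 e by (simp add: field_simps)
    ultimately have "\<bar>\<Sum>k<n. b k\<bar> < real n * e" by linarith
    then show "norm ((\<Sum>k<n. b k) / real n - 0) < e" using npos by (simp add: field_simps abs_divide)
  qed
qed

lemma cesaro:
  fixes s :: "nat \<Rightarrow> real"
  assumes s: "s \<longlonglongrightarrow> L"
  shows "(\<lambda>n. (c + (\<Sum>k<n. s k)) / real n) \<longlonglongrightarrow> L"
proof -
  have b: "(\<lambda>k. s k - L) \<longlonglongrightarrow> 0" using s by (simp add: LIM_zero)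
  have "(\<lambda>n. c / real n + (\<Sum>k<n. s k - L) / real n + L) \<longlonglongrightarrow> 0 + 0 + L"
    by (intro tendsto_add cesaro0[OF b] lim_const_over_n tendsto_const)
  moreover have "eventually (\<lambda>n. c / real n + (\<Sum>k<n. s k - L) / real n + L = (c + (\<Sum>k<n. s k)) / real n) sequentially"
    unfolding eventually_sequentially
    by (intro exI[of _ 1] allI impI) (simp add: sum_subtractf field_simps)
  ultimately show ?thesis by (simp add: tendsto_cong)
qed

theorem corollary1:
  fixes M :: "'a::topological_space measure" and T :: "'a \<Rightarrow> 'a"
    and X :: "'n::finite \<Rightarrow> 'a \<Rightarrow> real"
  assumes sys: "mpds M T"
    and X_meas: "\<And>i. X i \<in> borel_measurable M"
    and gen: "(\<lambda>d. ereal (ent_rel M T (ord_part M T X d))) \<longlonglongrightarrow> KS_entropy M T"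
    and ab: "(\<exists>d0. \<forall>d\<ge>d0. perm_entropy M T X d \<ge> perm_entropy M T X (Suc d))
             \<or> convergent (\<lambda>d. sorting_entropy M T X d)"
    and perm: "KS_entropy M T = limsup (\<lambda>d. ereal (perm_entropy M T X d))"
  shows "KS_entropy M T = limsup (\<lambda>d. ereal (cond_entropy M T X d))"
proof -
  define H where "H d = part_entropy M (ord_part M T X d)" for d
  have sH: "sorting_entropy M T X d = H (Suc d) - H d" for d unfolding sorting_entropy_def H_def ..
  have pH: "perm_entropy M T X d = H d / real d" for d unfolding perm_entropy_def H_def ..
  have sp: "limsup (\<lambda>d. ereal (sorting_entropy M T X d)) \<le> limsup (\<lambda>d. ereal (perm_entropy M T X d))"
    using ab
  proof
    assume "\<exists>d0. \<forall>d\<ge>d0. perm_entropy M T X d \<ge> perm_entropy M T X (Suc d)"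
    then obtain d0 where d0: "\<And>d. d \<ge> d0 \<Longrightarrow> perm_entropy M T X (Suc d) \<le> perm_entropy M T X d" by blast
    have "eventually (\<lambda>d. ereal (sorting_entropy M T X d) \<le> ereal (perm_entropy M T X d)) sequentially"
      unfolding eventually_sequentially
    proof (intro exI[of _ "max d0 1"] allI impI)
      fix d assume d: "max d0 1 \<le> d"
      then have dp: "real d > 0" by simp
      have "H (Suc d) / real (Suc d) \<le> H d / real d" using d0[of d] d unfolding pH by simp
      then have "H (Suc d) \<le> real (Suc d) * (H d / real d)"
        by (simp add: divide_le_eq mult.commute del: of_nat_Suc)
      also have "\<dots> = H d + H d / real d" using dp by (simp add: field_simps)
      finally show "ereal (sorting_entropy M T X d) \<le> ereal (perm_entropy M T X d)"
        unfolding sH pH by simp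
    qed
    then show ?thesis by (rule Limsup_mono)
  next
    assume "convergent (\<lambda>d. sorting_entropy M T X d)"
    then obtain L where L: "(\<lambda>d. sorting_entropy M T X d) \<longlonglongrightarrow> L" unfolding convergent_def by blast
    have "(\<lambda>d. (H 0 + (\<Sum>k<d. sorting_entropy M T X k)) / real d) \<longlonglongrightarrow> L"
      by (rule cesaro[OF L])
    moreover have "(H 0 + (\<Sum>k<d. sorting_entropy M T X k)) / real d = perm_entropy M T X d" for d
      unfolding sH pH by (simp add: sum_lessThan_telescope)
    ultimately have "(\<lambda>d. perm_entropy M T X d) \<longlonglongrightarrow> L" by simp
    then have "limsup (\<lambda>d. ereal (perm_entropy M T X d)) = ereal L"
      by (intro lim_imp_Limsup) (auto intro: tendsto_ereal)
    moreover have "limsup (\<lambda>d. ereal (sorting_entropy M T X d)) = ereal L"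
      using L by (intro lim_imp_Limsup) (auto intro: tendsto_ereal)
    ultimately show ?thesis by simp
  qed
  have "KS_entropy M T = liminf (\<lambda>d. ereal (ent_rel M T (ord_part M T X d)))"
    using gen by (intro lim_imp_Liminf[symmetric]) auto
  also have "\<dots> \<le> liminf (\<lambda>d. ereal (cond_entropy M T X d))"
    by (intro Liminf_mono always_eventually allI) (simp add: ent_rel_le_cond[OF sys X_meas])
  also have "\<dots> \<le> limsup (\<lambda>d. ereal (cond_entropy M T X d))"
    by (rule Liminf_le_Limsup) simp
  finally have 1: "KS_entropy M T \<le> limsup (\<lambda>d. ereal (cond_entropy M T X d))" .
  have "limsup (\<lambda>d. ereal (cond_entropy M T X d)) \<le> limsup (\<lambda>d. ereal (sorting_entropy M T X d))"
    by (intro Limsup_mono always_eventually allI) (simp add: cond_le_sort[OF sys X_meas])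
  also have "\<dots> \<le> KS_entropy M T" using sp perm by simp
  finally show ?thesis using 1 by (rule antisym[rotated])
qed

end
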